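(* Let $1\leq i\leq n-2$ and $k=\lceil n/(n-i)\rceil$. There exist $i$-dimensional linear subspaces $H_1,\dots,H_k$ of $\mathbb{R}^n$ such that all of the following hold: (i) $H_1^\perp+\cdots+H_k^\perp=\mathbb{R}^n$, and $\{H_1^\perp,\dots,H_k^\perp\}$ cannot be partitioned into two nonempty mutually orthogonal subsets; (ii) if $E\subset S^{n-1}$ is nonempty, closed, and $S^{n-1}\cap(H_j^\perp+x)\subset E$ for all $j=1,\dots,k$ and $x\in E$, then $E=S^{n-1}$; (iii) if $F\subset\mathbb{R}^n$ is closed and invariant under every rotation fixing $H_j$, for each $j$, then $F$ is a union of spheres centered at the origin; (iv) if $K$ is a convex body rotationally symmetric with respect to each $H_j$, then $K$ is a ball centered at the origin.
   Context: $H^\perp$ is the orthogonal complement; $S^{n-1}$ the unit sphere. A rotation fixing $H$ is an element of $SO(n)$ acting as the identity on $H$. A set $X$ is rotationally symmetric with respect to an $i$-dimensional subspace $H$ if for every $x\in H$, $X\cap(H^\perp+x)$ is a union of $(n-i-1)$-dimensional spheres centered at $x$. Two families of subspaces are mutually orthogonal if every subspace of one is orthogonal to every subspace of the other. A convex body is a compact convex set with nonempty interior. *)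

theory Defs
  imports "HOL-Analysis.Analysis"
begin

definition rotation_fixing :: "real^'n^'n \<Rightarrow> (real^'n) set \<Rightarrow> bool" where
  "rotation_fixing Q H \<longleftrightarrow> rotation_matrix Q \<and> (\<forall>h\<in>H. Q *v h = h)"

definition rot_sym :: "(real^'n) set \<Rightarrow> (real^'n) set \<Rightarrow> bool" where
  "rot_sym H X \<longleftrightarrow> (\<forall>x\<in>H. \<exists>R::real set. R \<subseteq> {0..} \<and>
      X \<inter> ((\<lambda>v. v + x) ` (H\<^sup>\<bottom>)) = (\<Union>r\<in>R. {v + x | v. v \<in> H\<^sup>\<bottom> \<and> norm v = r}))"

definition convex_body :: "(real^'n) set \<Rightarrow> bool" where
  "convex_body K \<longleftrightarrow> compact K \<and> convex K \<and> interior K \<noteq> {}"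

end

theory Submission
  imports Defs
begin


locale cons =
  fixes \<iota> :: "nat \<Rightarrow> 'n::finite" and m k :: nat
  assumes bij: "bij_betw \<iota> {0..<CARD('n)} UNIV"
    and m2: "2 \<le> m" and mlt: "m < CARD('n)" and nkm: "CARD('n) \<le> k * m"
begin

definition e :: "nat \<Rightarrow> real^'n" where "e a = axis (\<iota> a) 1"
definition W :: "nat \<Rightarrow> (real^'n) set" where
 "W j = (if j = 1 then span (e ` {0..<m}) else span ((\<lambda>a. e 0 + e a) ` {min ((j-1)*m) (CARD('n) - m)..<min ((j-1)*m) (CARD('n) - m) + m}))"

lemma inj: "inj_on \<iota> {0..<CARD('n)}" using bij bij_betw_def by blast

lemma e_inner: "a < CARD('n) \<Longrightarrow> b < CARD('n) \<Longrightarrow> e a \<bullet> e b = (if a = b then 1 else 0)"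
  by (auto simp: e_def inner_axis_axis dest: inj_onD[OF inj])
lemma inner_e: "x \<bullet> e a = x $ \<iota> a" by (simp add: e_def inner_axis)
lemma e_comp: "a < CARD('n) \<Longrightarrow> b < CARD('n) \<Longrightarrow> e a $ \<iota> b = (if a = b then 1 else 0)"
  by (auto simp: e_def axis_def dest: inj_onD[OF inj])
lemma e_inj: "inj_on e {0..<CARD('n)}"
  by (auto simp: inj_on_def e_def axis_eq_axis dest: inj_onD[OF inj])

lemma n_ge: "3 \<le> CARD('n)" using m2 mlt by linarith
lemma k_pos: "1 \<le> k" using nkm n_ge by (cases k) auto

lemma subspace_W: "subspace (W j)" by (simp add: W_def)

lemma sj_ge: "j \<ge> 2 \<Longrightarrow> 1 \<le> min ((j-1)*m) (CARD('n) - m)" using m2 mlt by (cases j) auto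
lemma sj_le: "min ((j-1)*m) (CARD('n) - m) + m \<le> CARD('n)" using m2 mlt by auto

lemma dim_W: assumes j1: "1 \<le> j" shows "dim (W j) = m"
proof (cases "j = 1")
  case True
  have "independent (e ` {0..<m})"
    apply (rule pairwise_orthogonal_independent)
    using mlt by (auto simp: pairwise_def orthogonal_def inner_axis_axis e_def)
  moreover have "card (e ` {0..<m}) = m"
    using card_image[OF inj_on_subset[OF e_inj, of "{0..<m}"]] mlt by auto
  ultimately show ?thesis using True by (simp add: W_def dim_eq_card_independent)
next
  case False
  define s0 where "s0 = min ((j-1)*m) (CARD('n) - m)"
  have Weq: "W j = span ((\<lambda>a. e 0 + e a) ` {s0..<s0+m})" using False by (simp add: W_def s0_def)
  let ?S = "(\<lambda>a. e 0 + e a) ` {s0..<s0 + m}"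
  have sj1: "1 \<le> s0" using False j1 sj_ge[of j] unfolding s0_def by auto
  have bnd: "s0 + m \<le> CARD('n)" unfolding s0_def by (rule sj_le)
  have inj2: "inj_on (\<lambda>a. e 0 + e a) {s0..<s0 + m}"
    using inj_on_subset[OF e_inj, of "{s0..<s0 + m}"] bnd by (auto simp: inj_on_def)
  have "independent ?S"
  proof
    assume "dependent ?S"
    then obtain u where u: "\<exists>v\<in>?S. u v \<noteq> 0" "(\<Sum>v\<in>?S. u v *\<^sub>R v) = 0"
      using dependent_finite[of ?S] by auto
    then obtain a where a: "a \<in> {s0..<s0 + m}" "u (e 0 + e a) \<noteq> 0" by auto
    have "0 = (\<Sum>v\<in>?S. u v *\<^sub>R v) $ \<iota> a" using u by simp
    also have "\<dots> = (\<Sum>b\<in>{s0..<s0 + m}. u (e 0 + e b) * (e 0 + e b) $ \<iota> a)"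
      by (subst sum.reindex[OF inj2]) (simp add: comp_def)
    also have "\<dots> = (\<Sum>b\<in>{s0..<s0 + m}. if b = a then u (e 0 + e b) else 0)"
    proof (rule sum.cong)
      fix b assume b: "b \<in> {s0..<s0 + m}"
      have ab: "1 \<le> a" "a < CARD('n)" "1 \<le> b" "b < CARD('n)" using a(1) b sj1 bnd by (simp_all del: One_nat_def)
      then show "u (e 0 + e b) * (e 0 + e b) $ \<iota> a = (if b = a then u (e 0 + e b) else 0)"
        by (auto simp: e_comp)
    qed simp
    also have "\<dots> = u (e 0 + e a)" using a by simp
    finally show False using a by simp
  qed
  moreover have "card ?S = m" using card_image[OF inj2] by simp
  ultimately show ?thesis using Weq by (simp add: dim_eq_card_independent)
qed


lemma W_perp_perp: "(W j)\<^sup>\<bottom>\<^sup>\<bottom> = W j"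
  by (rule orthogonal_comp_self[OF subspace_W])

lemma dim_perp: assumes "1 \<le> j" shows "dim ((W j)\<^sup>\<bottom>) = CARD('n) - m"
proof -
  have "dim {y \<in> UNIV. \<forall>x \<in> W j. orthogonal x y} + dim (W j) = dim (UNIV :: (real^'n) set)"
    by (rule dim_subspace_orthogonal_to_vectors) (auto simp: subspace_W)
  moreover have "{y \<in> UNIV. \<forall>x \<in> W j. orthogonal x y} = (W j)\<^sup>\<bottom>"
    by (auto simp: orthogonal_comp_def)
  ultimately show ?thesis using dim_W[OF assms] by simp
qed

lemma e_W1: "a < m \<Longrightarrow> e a \<in> W 1"
  by (simp add: W_def span_base)

lemma bridge_in: assumes "m \<le> a" "a < CARD('n)"
  shows "\<exists>j\<in>{2..k}. e 0 + e a \<in> W j"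
proof -
  let ?j = "a div m + 1"
  have am: "a div m * m \<le> a" "a < a div m * m + m"
    using div_mult_mod_eq[of a m] mod_less_divisor[of m a] m2 by linarith+
  have "1 \<le> a div m" using div_le_mono[of m a m] m2 assms by simp
  moreover have "a div m < k"
  proof -
    have "a < k * m" using assms nkm by linarith
    then show ?thesis using m2 by (simp add: div_less_iff_less_mult)
  qed
  moreover have "min ((a div m + 1 - 1)*m) (CARD('n) - m) \<le> a \<and> a < min ((a div m + 1 - 1)*m) (CARD('n) - m) + m"
  proof (cases "a div m * m \<le> CARD('n) - m")
    case True then show ?thesis using am by (simp add: min_def)
  next
    case False
    have "CARD('n) - m \<le> a" using False am(1) by (meson le_trans nat_le_linear)
    moreover have "min ((a div m + 1 - 1)*m) (CARD('n) - m) = CARD('n) - m" using False by simp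
    ultimately show ?thesis using assms mlt by linarith
  qed
  ultimately show ?thesis
    by (intro bexI[of _ ?j]) (auto simp: W_def span_base)
qed

lemma expand: "x = (\<Sum>a<CARD('n). (x $ \<iota> a) *\<^sub>R e a)"
proof -
  have "x = (\<Sum>i\<in>UNIV. (x$i) *s axis i 1)" by (simp add: basis_expansion)
  also have "\<dots> = (\<Sum>a\<in>{0..<CARD('n)}. (x $ \<iota> a) *\<^sub>R e a)"
    by (simp add: sum.reindex_bij_betw[OF bij, symmetric] e_def scalar_mult_eq_scaleR)
  finally show ?thesis by (simp add: atLeast0LessThan)
qed

definition mv :: "nat \<Rightarrow> real^'n \<Rightarrow> real^'n \<Rightarrow> bool" where
  "mv j x z \<longleftrightarrow> z - x \<in> W j \<and> norm z = norm x"
definition st :: "real^'n \<Rightarrow> real^'n \<Rightarrow> bool" where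
  "st x z \<longleftrightarrow> (\<exists>j\<in>{1..k}. mv j x z)"
abbreviation reach where "reach \<equiv> st\<^sup>*\<^sup>*"

lemma norm_add_eq: "2 * (x \<bullet> d) + d \<bullet> d = 0 \<Longrightarrow> norm (x + d) = norm (x::real^'n)"
proof -
  assume h: "2 * (x \<bullet> d) + d \<bullet> d = 0"
  have "(x + d) \<bullet> (x + d) = x \<bullet> x" using h by (simp add: inner_add inner_commute algebra_simps)
  then show ?thesis by (simp add: norm_eq_sqrt_inner)
qed

lemma st_sym: "st x z \<Longrightarrow> st z x"
  unfolding st_def mv_def
  by (metis minus_diff_eq subspace_W subspace_neg)

lemma reach_sym: "reach x y \<Longrightarrow> reach y x"
  by (induct rule: rtranclp_induct) (auto intro: converse_rtranclp_into_rtranclp st_sym)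

lemma reach_norm: "reach x y \<Longrightarrow> norm y = norm x"
  by (induct rule: rtranclp_induct) (auto simp: st_def mv_def)

lemma zero_step:
  assumes t: "m \<le> t" "t < CARD('n)"
  shows "\<exists>z. reach x z \<and> z $ \<iota> t = 0 \<and> (\<forall>c. 2 \<le> c \<longrightarrow> c < CARD('n) \<longrightarrow> c \<noteq> t \<longrightarrow> z $ \<iota> c = x $ \<iota> c)"
proof -
  have n1: "0 < CARD('n)" "1 < CARD('n)" using n_ge by auto
  define p where "p = x $ \<iota> 0"
  define q1 where "q1 = x $ \<iota> 1"
  define s where "s = sqrt (p\<^sup>2 + q1\<^sup>2)"
  have s2': "s * s = p\<^sup>2 + q1\<^sup>2" unfolding s_def
    by (simp add: real_sqrt_mult_self)
  have s2: "s * s = p * p + q1 * q1" using s2' by (simp add: power2_eq_square)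
  define d1 where "d1 = (- p) *\<^sub>R e 0 + (s - q1) *\<^sub>R e 1"
  define x1 where "x1 = x + d1"
  have ee: "e 0 \<bullet> e 0 = 1" "e 1 \<bullet> e 1 = 1" "e 0 \<bullet> e 1 = 0" "e 1 \<bullet> e 0 = 0"
    using n1 by (auto simp: e_inner)
  have "mv 1 x x1"
    unfolding mv_def
  proof
    show "x1 - x \<in> W 1"
    proof -
      have h0: "e 0 \<in> W 1" using m2 by (intro e_W1) linarith
      have h1: "e 1 \<in> W 1" using m2 by (intro e_W1) linarith
      have "d1 \<in> W 1" unfolding d1_def
        by (rule subspace_add[OF subspace_W subspace_scale[OF subspace_W h0] subspace_scale[OF subspace_W h1]])
      then show ?thesis by (simp add: x1_def)
    qed
    show "norm x1 = norm x" unfolding x1_def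
    proof (rule norm_add_eq)
      have a1: "x \<bullet> d1 = - p * p + (s - q1) * q1"
        by (simp add: d1_def inner_add_right inner_diff_right inner_e p_def q1_def)
      have a2: "d1 \<bullet> d1 = p * p + (s - q1) * (s - q1)"
        by (simp add: d1_def inner_diff_right inner_diff_left ee ee[simplified] algebra_simps)
      show "2 * (x \<bullet> d1) + d1 \<bullet> d1 = 0" unfolding a1 a2 using s2
        by (simp add: algebra_simps)
    qed
  qed
  then have r1: "reach x x1" using k_pos
    by (auto simp: st_def intro!: r_into_rtranclp bexI[of _ 1] k_pos)
  have x1c: "x1 $ \<iota> c = x $ \<iota> c" if "2 \<le> c" "c < CARD('n)" for c
    using that n1 by (simp add: x1_def d1_def e_comp)
  have x10: "x1 $ \<iota> 0 = 0" using n1 by (simp add: x1_def d1_def e_comp p_def)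
  obtain j where j: "j \<in> {2..k}" "e 0 + e t \<in> W j" using bridge_in[OF t] by blast
  define q where "q = x1 $ \<iota> t"
  define x2 where "x2 = x1 + (- q) *\<^sub>R (e 0 + e t)"
  have t0: "t \<noteq> 0" using t m2 by auto
  have "mv j x1 x2"
    unfolding mv_def
  proof
    show "x2 - x1 \<in> W j" unfolding x2_def using subspace_scale[OF subspace_W j(2), of "- q"] by simp
    show "norm x2 = norm x1" unfolding x2_def
    proof (rule norm_add_eq)
      have b1: "x1 \<bullet> ((- q) *\<^sub>R (e 0 + e t)) = - q * q"
        by (simp add: inner_add_right inner_e x10 q_def)
      have b2: "((- q) *\<^sub>R (e 0 + e t)) \<bullet> ((- q) *\<^sub>R (e 0 + e t)) = 2 * q * q"
        using t t0 n1 by (simp add: inner_add_right inner_add_left e_inner)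
      show "2 * (x1 \<bullet> ((- q) *\<^sub>R (e 0 + e t))) + ((- q) *\<^sub>R (e 0 + e t)) \<bullet> ((- q) *\<^sub>R (e 0 + e t)) = 0"
        unfolding b1 b2 by simp
    qed
  qed
  then have "st x1 x2" using j unfolding st_def by (intro bexI[of _ j]) auto
  then have r2: "reach x1 x2" by (rule r_into_rtranclp)
  show ?thesis
  proof (intro exI conjI allI impI)
    show "reach x x2" using r1 r2 by simp
    show "x2 $ \<iota> t = 0" using t t0 n1 by (simp add: x2_def e_comp q_def)
    fix c assume c: "2 \<le> c" "c < CARD('n)" "c \<noteq> t"
    then show "x2 $ \<iota> c = x $ \<iota> c" using t t0 n1 x1c[OF c(1,2)] by (simp add: x2_def e_comp)
  qed
qed

lemma zero_upto: "d \<le> CARD('n) - m \<Longrightarrow> \<exists>z. reach x z \<and> (\<forall>c. m \<le> c \<longrightarrow> c < m + d \<longrightarrow> z $ \<iota> c = 0)"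
proof (induct d)
  case 0 then show ?case by auto
next
  case (Suc d)
  then obtain z where z: "reach x z" "\<forall>c. m \<le> c \<longrightarrow> c < m + d \<longrightarrow> z $ \<iota> c = 0" by auto
  have md: "m + d < CARD('n)" using Suc.prems by linarith
  obtain z' where z': "reach z z'" "z' $ \<iota> (m + d) = 0"
     "\<forall>c. 2 \<le> c \<longrightarrow> c < CARD('n) \<longrightarrow> c \<noteq> m + d \<longrightarrow> z' $ \<iota> c = z $ \<iota> c"
    using zero_step[of "m + d" z] md by auto
  show ?case
  proof (intro exI conjI allI impI)
    show "reach x z'" using z z' by simp
    fix c assume c: "m \<le> c" "c < m + Suc d"
    show "z' $ \<iota> c = 0"
    proof (cases "c = m + d")
      case True then show ?thesis using z' by simp
    next
      case False then show ?thesis using z' z c m2 Suc.prems by auto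
    qed
  qed
qed

lemma reach_base: "reach x (norm x *\<^sub>R e 0)"
proof -
  obtain z where z: "reach x z" "\<forall>c. m \<le> c \<longrightarrow> c < CARD('n) \<longrightarrow> z $ \<iota> c = 0"
    using zero_upto[of "CARD('n) - m" x] mlt by auto
  have "z = (\<Sum>a<CARD('n). (z $ \<iota> a) *\<^sub>R e a)" by (rule expand)
  also have "\<dots> = (\<Sum>a<m. (z $ \<iota> a) *\<^sub>R e a)"
  proof -
    have "(\<Sum>a<CARD('n). (z $ \<iota> a) *\<^sub>R e a) = (\<Sum>a<m. (z $ \<iota> a) *\<^sub>R e a) + (\<Sum>a\<in>{m..<CARD('n)}. (z $ \<iota> a) *\<^sub>R e a)"
      using mlt by (metis (no_types, lifting) atLeast0LessThan less_imp_le_nat sum.atLeastLessThan_concat zero_le)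
    moreover have "(\<Sum>a\<in>{m..<CARD('n)}. (z $ \<iota> a) *\<^sub>R e a) = 0" using z by auto
    ultimately show ?thesis by simp
  qed
  finally have zW: "z \<in> W 1"
    by (metis (no_types, lifting) e_W1 lessThan_iff subspace_W subspace_scale subspace_sum)
  have "mv 1 z (norm z *\<^sub>R e 0)"
    unfolding mv_def
    using zW e_W1[of 0] m2 by (auto intro!: subspace_diff subspace_scale simp: subspace_W e_def)
  then have "reach z (norm z *\<^sub>R e 0)" using k_pos
    by (auto simp: st_def intro!: r_into_rtranclp bexI[of _ 1] k_pos)
  with z reach_norm[OF z(1)] show ?thesis by simp
qed

lemma reach_all: "norm x = norm y \<Longrightarrow> reach x y"
  using reach_base[of x] reach_base[of y] reach_sym[of y] by (metis rtranclp_trans)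

end



lemma refl_matrix_exists:
  fixes u :: "real^'n" assumes u: "u \<noteq> 0"
  obtains M where "orthogonal_matrix M" "det M = -1" "\<And>v. M *v v = v - (2 * (v \<bullet> u) / (u \<bullet> u)) *\<^sub>R u"
proof -
  obtain c :: 'n where True by simp
  define a where "a = u /\<^sub>R norm u"
  have na: "norm a = 1" using u by (simp add: a_def)
  obtain P where P: "orthogonal_matrix P" "P *v (axis c 1) = a"
    using orthogonal_matrix_exists_basis[OF na] by metis
  define D :: "real^'n^'n" where "D = (\<chi> i j. if i = j then (if i = c then -1 else 1) else 0)"
  have DD: "D ** D = mat 1"
    by (auto simp: D_def matrix_matrix_mult_def mat_def vec_eq_iff if_distrib[of "\<lambda>x. x * _"] sum.delta cong: if_cong)
  have Dt: "transpose D = D"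
    by (auto simp: D_def transpose_def vec_eq_iff)
  have oD: "orthogonal_matrix D" using DD Dt by (simp add: orthogonal_matrix_def)
  have dD: "det D = -1"
  proof -
    have "det D = prod (\<lambda>i. D$i$i) UNIV" by (rule det_diagonal) (simp add: D_def)
    also have "\<dots> = prod (\<lambda>i. if i = c then -1 else 1) UNIV" by (simp add: D_def)
    also have "\<dots> = -1" by (simp add: prod.If_cases)
    finally show ?thesis .
  qed
  define M where "M = P ** D ** transpose P"
  have oM: "orthogonal_matrix M" unfolding M_def
    by (intro orthogonal_matrix_mul oD P(1) orthogonal_matrix_transpose[THEN iffD2])
  have dP: "det P * det P = 1" using det_orthogonal_matrix[OF P(1)] by auto
  have dM: "det M = -1" unfolding M_def by (simp add: det_mul dD dP)
  have Dv: "D *v y = y - (2 * y $ c) *\<^sub>R axis c 1" for y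
    by (auto simp: D_def matrix_vector_mult_def vec_eq_iff axis_def if_distrib[of "\<lambda>x. x * _"] sum.delta cong: if_cong)
  have tc: "(transpose P *v v) $ c = v \<bullet> a" for v
  proof -
    have "a = (\<chi> i. P $ i $ c)" using P(2) by (simp add: matrix_vector_mult_basis column_def)
    then show ?thesis
      by (simp add: transpose_def matrix_vector_mult_def inner_vec_def mult.commute)
  qed
  have Mv: "M *v v = v - (2 * (v \<bullet> a)) *\<^sub>R a" for v
  proof -
    have "M *v v = P *v (D *v (transpose P *v v))"
      by (simp only: M_def matrix_vector_mul_assoc matrix_mul_assoc)
    also have "\<dots> = P *v (transpose P *v v) - (2 * (v \<bullet> a)) *\<^sub>R (P *v axis c 1)"
      by (simp add: Dv tc tc[simplified] matrix_vector_mult_diff_distrib matrix_vector_mult_scaleR)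
    also have "\<dots> = v - (2 * (v \<bullet> a)) *\<^sub>R a"
    proof -
      have "P *v (transpose P *v v) = v"
        using P(1) by (simp only: matrix_vector_mul_assoc orthogonal_matrix_def matrix_vector_mul_lid)
      then show ?thesis using P(2) by simp
    qed
    finally show ?thesis .
  qed
  have "(2 * (v \<bullet> a)) *\<^sub>R a = (2 * (v \<bullet> u) / (u \<bullet> u)) *\<^sub>R u" for v
    using u by (simp add: a_def inner_scaleR_right power2_norm_eq_inner[symmetric] power2_eq_square field_simps)
  then show ?thesis using that[OF oM dM] Mv by simp
qed



lemma rot_exists:
  fixes V :: "(real^'n) set"
  assumes V: "subspace V" "2 \<le> dim V" and xz: "x - z \<in> V" "norm x = norm z"
  obtains Q where "rotation_fixing Q (V\<^sup>\<bottom>)" "Q *v x = z"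
proof (cases "x = z")
  case True
  have "rotation_fixing (mat 1) (V\<^sup>\<bottom>)"
    by (simp add: rotation_fixing_def rotation_matrix_def orthogonal_matrix_id det_I)
  then show ?thesis using that True by (simp add: matrix_vector_mul_lid)
next
  case False
  define u where "u = x - z"
  have u0: "u \<noteq> 0" using False by (simp add: u_def)
  obtain Mu where Mu: "orthogonal_matrix Mu" "det Mu = -1" "\<And>v. Mu *v v = v - (2 * (v \<bullet> u) / (u \<bullet> u)) *\<^sub>R u"
    using refl_matrix_exists[OF u0] by metis
  have xx: "x \<bullet> x = z \<bullet> z" using xz(2) by (simp add: norm_eq_sqrt_inner)
  have uu: "u \<bullet> u = 2 * (x \<bullet> u)"
    unfolding u_def using xx by (simp add: inner_diff_left inner_diff_right inner_commute)
  have uu0: "u \<bullet> u \<noteq> 0" using u0 by simp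
  have Mux: "Mu *v x = z" using uu uu0 by (simp add: Mu(3) u_def)
  obtain zv zp where zv: "zv \<in> span V" "\<And>w. w \<in> span V \<Longrightarrow> orthogonal zp w" "z = zv + zp"
    using orthogonal_subspace_decomp_exists[of V z] by metis
  have "span {zv} \<subset> span V"
  proof
    show "span {zv} \<subseteq> span V" using zv(1) by (simp add: span_minimal subspace_span)
    have "dim (span {zv}) \<le> 1" using dim_le_card[of "span {zv}" "{zv}"] by simp
    then show "span {zv} \<noteq> span V" using V by (auto simp: span_eq_iff[THEN iffD2])
  qed
  then obtain w where w: "w \<noteq> 0" "w \<in> span V" "\<And>y. y \<in> span {zv} \<Longrightarrow> orthogonal w y"
    using orthogonal_to_subspace_exists_gen by metis
  have wV: "w \<in> V" using w(2) V(1) by (simp add: span_eq_iff[THEN iffD2])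
  have wz: "z \<bullet> w = 0"
  proof -
    have "orthogonal w zv" using w(3) by (simp add: span_base)
    moreover have "orthogonal zp w" using zv(2) w(2) by simp
    ultimately have "w \<bullet> zv = 0" "w \<bullet> zp = 0" by (simp_all add: orthogonal_def inner_commute)
    then show ?thesis using zv(3) by (simp add: inner_add_right inner_commute)
  qed
  obtain Mw where Mw: "orthogonal_matrix Mw" "det Mw = -1" "\<And>v. Mw *v v = v - (2 * (v \<bullet> w) / (w \<bullet> w)) *\<^sub>R w"
    using refl_matrix_exists[OF w(1)] by metis
  define Q where "Q = Mw ** Mu"
  have "rotation_fixing Q (V\<^sup>\<bottom>)"
    unfolding rotation_fixing_def rotation_matrix_def
  proof (intro conjI ballI)
    show "orthogonal_matrix Q" unfolding Q_def using Mw Mu by (simp add: orthogonal_matrix_mul)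
    show "det Q = 1" unfolding Q_def by (simp add: det_mul Mw Mu)
    fix h assume h: "h \<in> V\<^sup>\<bottom>"
    have hu: "h \<bullet> u = 0" using h xz(1) unfolding u_def orthogonal_comp_def orthogonal_def by (auto simp: inner_commute)
    have hw: "h \<bullet> w = 0" using h wV unfolding orthogonal_comp_def orthogonal_def by (auto simp: inner_commute)
    show "Q *v h = h" unfolding Q_def by (simp add: matrix_vector_mul_assoc[symmetric] Mu(3) Mw(3) hu hw)
  qed
  moreover have "Q *v x = z" unfolding Q_def by (simp add: matrix_vector_mul_assoc[symmetric] Mux Mw(3) wz)
  ultimately show ?thesis using that by blast
qed

context cons begin

lemma st_closed:
  assumes "\<forall>j\<in>{1..k}. \<forall>x\<in>S. \<forall>z. z - x \<in> W j \<and> norm z = norm x \<longrightarrow> z \<in> S"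
  shows "x \<in> S \<Longrightarrow> norm y = norm x \<Longrightarrow> y \<in> S"
proof -
  assume x: "x \<in> S" and n: "norm y = norm x"
  have "reach x y" using reach_all n by simp
  then show "y \<in> S"
    by (induct rule: rtranclp_induct) (use x assms in \<open>auto simp: st_def mv_def\<close>)
qed

lemma part_ii:
  assumes "E \<subseteq> sphere 0 1" "E \<noteq> {}"
    "\<forall>j\<in>{1..k}. \<forall>x\<in>E. sphere 0 1 \<inter> ((\<lambda>v. v + x) ` ((W j)\<^sup>\<bottom>\<^sup>\<bottom>)) \<subseteq> E"
  shows "E = sphere 0 1"
proof
  show "E \<subseteq> sphere 0 1" by fact
  obtain x0 where x0: "x0 \<in> E" using assms(2) by auto
  have cl: "z \<in> E" if "j \<in> {1..k}" "x \<in> E" "z - x \<in> W j" "norm z = norm x" for j x z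
  proof -
    have "norm x = 1" using that(2) assms(1) by auto
    then have "z \<in> sphere 0 1" using that(4) by simp
    moreover have "z \<in> (\<lambda>v. v + x) ` ((W j)\<^sup>\<bottom>\<^sup>\<bottom>)"
      unfolding W_perp_perp using that(3) by (intro image_eqI[of _ _ "z - x"]) auto
    ultimately show ?thesis using assms(3) that(1,2) by blast
  qed
  show "sphere 0 1 \<subseteq> E"
  proof
    fix y assume y: "y \<in> sphere (0::real^'n) 1"
    have "norm y = norm x0" using y x0 assms(1) by auto
    moreover have "\<forall>j\<in>{1..k}. \<forall>x\<in>E. \<forall>z. z - x \<in> W j \<and> norm z = norm x \<longrightarrow> z \<in> E" using cl by blast
    ultimately show "y \<in> E" using st_closed[of E x0 y] x0 by blast
  qed
qed

lemma part_iii: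
  assumes "\<forall>j\<in>{1..k}. \<forall>Q. rotation_fixing Q ((W j)\<^sup>\<bottom>) \<longrightarrow> (\<lambda>y. Q *v y) ` F \<subseteq> F"
  shows "\<exists>R::real set. (F :: (real^'n) set) = (\<Union>r\<in>R. sphere 0 r)"
proof (intro exI[of _ "norm ` F"] set_eqI iffI)
  fix y :: "real^'n" assume "y \<in> F" then show "y \<in> (\<Union>r\<in>norm ` F. sphere 0 r)" by auto
next
  have cl: "z \<in> F" if asm: "j \<in> {1..k}" "x \<in> F" "z - x \<in> W j" "norm z = norm x" for j x z
  proof -
    have "x - z \<in> W j" using asm(3) by (metis minus_diff_eq subspace_W subspace_neg)
    moreover have "2 \<le> dim (W j)" using dim_W[of j] m2 asm(1) by simp
    ultimately obtain Q where "rotation_fixing Q ((W j)\<^sup>\<bottom>)" "Q *v x = z"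
      using rot_exists[OF subspace_W] asm(4) by metis
    then show ?thesis using assms asm(1,2) by blast
  qed
  fix y :: "real^'n" assume "y \<in> (\<Union>r\<in>norm ` F. sphere 0 r)"
  then obtain x where "x \<in> F" "norm y = norm x" by auto
  moreover have "\<forall>j\<in>{1..k}. \<forall>x\<in>F. \<forall>z. z - x \<in> W j \<and> norm z = norm x \<longrightarrow> z \<in> F" using cl by blast
  ultimately show "y \<in> F" using st_closed[of F x y] by blast
qed

lemma part_iv:
  assumes K: "convex_body K" and rs: "\<forall>j\<in>{1..k}. rot_sym ((W j)\<^sup>\<bottom>) K"
  shows "\<exists>r>0. K = cball 0 r"
proof -
  have cl: "z \<in> K" if j: "j \<in> {1..k}" and yK: "y \<in> K" and zy: "z - y \<in> W j" and nz: "norm z = norm y" for j y z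
  proof -
    obtain v h where vh: "v \<in> span (W j)" "\<And>w. w \<in> span (W j) \<Longrightarrow> orthogonal h w" "y = v + h"
      using orthogonal_subspace_decomp_exists[of "W j" y] by metis
    have sW: "span (W j) = W j" by (simp add: span_eq_iff subspace_W)
    have vW: "v \<in> W j" using vh(1) sW by simp
    have hH: "h \<in> (W j)\<^sup>\<bottom>" using vh(2) sW unfolding orthogonal_comp_def by (auto simp: orthogonal_commute)
    have rsj: "rot_sym ((W j)\<^sup>\<bottom>) K" using rs j by blast
    from rsj[unfolded rot_sym_def, rule_format, OF hH] obtain R where
      R: "K \<inter> ((\<lambda>v. v + h) ` ((W j)\<^sup>\<bottom>\<^sup>\<bottom>)) = (\<Union>r\<in>R. {v + h | v. v \<in> (W j)\<^sup>\<bottom>\<^sup>\<bottom> \<and> norm v = r})"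
      by blast
    have "y \<in> K \<inter> ((\<lambda>v. v + h) ` ((W j)\<^sup>\<bottom>\<^sup>\<bottom>))" using yK vW vh(3) unfolding W_perp_perp by auto
    then obtain r v0 where r: "r \<in> R" "v0 \<in> W j" "norm v0 = r" "y = v0 + h" using R unfolding W_perp_perp by auto
    have v0: "v0 = v" using r(4) vh(3) by simp
    define v' where "v' = v + (z - y)"
    have v'W: "v' \<in> W j" unfolding v'_def using vW zy by (simp add: subspace_add subspace_W)
    have zeq: "z = v' + h" unfolding v'_def using vh(3) by simp
    have "orthogonal h v'" using vh(2)[of v'] v'W sW by simp
    then have o1: "orthogonal v' h" by (simp add: orthogonal_commute)
    have "orthogonal h v" using vh(2)[of v] vW sW by simp
    then have o2: "orthogonal v h" by (simp add: orthogonal_commute)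
    have "(norm v')\<^sup>2 = (norm v)\<^sup>2"
      using norm_add_Pythagorean[OF o1] norm_add_Pythagorean[OF o2] zeq vh(3) nz by simp
    then have "norm v' = r" using r(3) v0 by (simp add: power2_eq_iff_nonneg)
    then have "z \<in> (\<Union>r\<in>R. {v + h | v. v \<in> (W j)\<^sup>\<bottom>\<^sup>\<bottom> \<and> norm v = r})"
      unfolding W_perp_perp using r(1) v'W zeq by blast
    then show ?thesis using R by blast
  qed
  have cK: "compact K" "convex K" "interior K \<noteq> {}" using K by (auto simp: convex_body_def)
  then have Kne: "K \<noteq> {}" using interior_subset by blast
  obtain xm where xm: "xm \<in> K" "\<And>y. y \<in> K \<Longrightarrow> dist 0 y \<le> dist 0 xm"
    using distance_attains_sup[OF cK(1) Kne, of 0] by blast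
  define r where "r = norm xm"
  have sub1: "K \<subseteq> cball 0 r" using xm(2) by (auto simp: r_def)
  have sub2: "cball 0 r \<subseteq> K"
  proof
    fix y :: "real^'n" assume "y \<in> cball 0 r"
    then have yr: "norm y \<le> r" by simp
    have "2 \<le> DIM(real^'n)" using n_ge by simp
    then obtain e0 where e0: "e0 \<noteq> 0" "orthogonal y e0" using orthogonal_to_vector_exists by blast
    define e1 where "e1 = e0 /\<^sub>R norm e0"
    have ne1: "norm e1 = 1" using e0 by (simp add: e1_def)
    have oe1: "orthogonal y e1" using e0 by (simp add: e1_def orthogonal_clauses)
    define t where "t = sqrt (r\<^sup>2 - (norm y)\<^sup>2)"
    have t2: "t\<^sup>2 = r\<^sup>2 - (norm y)\<^sup>2" unfolding t_def using yr norm_ge_zero[of y]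
      by (simp add: power_mono)
    have np: "norm (y + t *\<^sub>R e1) = r" "norm (y + (- t) *\<^sub>R e1) = r"
    proof -
      have "(norm (y + t *\<^sub>R e1))\<^sup>2 = r\<^sup>2"
        using norm_add_Pythagorean[of y "t *\<^sub>R e1"] oe1 t2 ne1 by (simp add: orthogonal_clauses)
      then show "norm (y + t *\<^sub>R e1) = r" using r_def by (simp add: power2_eq_iff_nonneg)
      have "(norm (y + (- t) *\<^sub>R e1))\<^sup>2 = r\<^sup>2"
        using norm_add_Pythagorean[of y "(- t) *\<^sub>R e1"] oe1 t2 ne1 by (simp add: orthogonal_clauses)
      then show "norm (y + (- t) *\<^sub>R e1) = r" using r_def by (simp add: power2_eq_iff_nonneg)
    qed
    have pK: "y + t *\<^sub>R e1 \<in> K" "y + (- t) *\<^sub>R e1 \<in> K"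
    proof -
      have "\<forall>j\<in>{1..k}. \<forall>x\<in>K. \<forall>z. z - x \<in> W j \<and> norm z = norm x \<longrightarrow> z \<in> K" using cl by blast
      then show "y + t *\<^sub>R e1 \<in> K" "y + (- t) *\<^sub>R e1 \<in> K"
        using st_closed[of K xm] xm(1) np r_def by auto
    qed
    have "(1/2) *\<^sub>R (y + t *\<^sub>R e1) + (1/2) *\<^sub>R (y + (- t) *\<^sub>R e1) \<in> K"
      by (rule convexD[OF cK(2) pK]) auto
    moreover have "(1/2) *\<^sub>R (y + t *\<^sub>R e1) + (1/2) *\<^sub>R (y + (- t) *\<^sub>R e1) = y"
      by (simp add: algebra_simps scaleR_2[symmetric] flip: scaleR_add_left)
    ultimately show "y \<in> K" by simp
  qed
  have Keq: "K = cball 0 r" using sub1 sub2 by auto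
  have "r > 0"
  proof (rule ccontr)
    assume "\<not> r > 0"
    then have "r = 0" using r_def by simp
    then have "K = {0}" using Keq by simp
    then show False using cK(3) by simp
  qed
  then show ?thesis using Keq by blast
qed

end


context cons begin

lemma span_all: "span (\<Union>j\<in>{1..k}. (W j)\<^sup>\<bottom>\<^sup>\<bottom>) = UNIV"
proof -
  let ?T = "span (\<Union>j\<in>{1..k}. (W j)\<^sup>\<bottom>\<^sup>\<bottom>)"
  have WT: "v \<in> ?T" if "j \<in> {1..k}" "v \<in> W j" for j v
    using that by (intro span_base) (auto simp: W_perp_perp)
  have e0: "e 0 \<in> ?T" using WT[of 1 "e 0"] k_pos m2 e_W1[of 0] by simp
  have ea: "e a \<in> ?T" if aa: "a < CARD('n)" for a
  proof (cases "a < m")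
    case True then show ?thesis using WT[of 1 "e a"] k_pos e_W1[of a] by simp
  next
    case False
    then obtain j where j: "j \<in> {2..k}" "e 0 + e a \<in> W j" using bridge_in[of a] aa False by auto
    then have "e 0 + e a \<in> ?T" using WT[of j] by auto
    then have "(e 0 + e a) - e 0 \<in> ?T" using e0 by (rule span_diff)
    then show ?thesis by simp
  qed
  have "x \<in> ?T" for x
  proof -
    have "(\<Sum>a<CARD('n). (x $ \<iota> a) *\<^sub>R e a) \<in> ?T"
      by (intro span_sum span_scale ea) auto
    then show ?thesis using expand[of x] by simp
  qed
  then show ?thesis by auto
qed

lemma nonorth: assumes "j \<in> {1..k}" shows "\<exists>v\<in>W j. \<not> orthogonal (e 0) v"
proof (cases "j = 1")
  case True
  then show ?thesis using e_W1[of 0] m2 n_ge by (intro bexI[of _ "e 0"]) (auto simp: orthogonal_def e_inner)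
next
  case False
  define s where "s = min ((j-1)*m) (CARD('n) - m)"
  have s1: "1 \<le> s" using False assms sj_ge[of j] by (auto simp: s_def)
  have s2: "s < CARD('n)" using sj_le[of j] m2 by (simp add: s_def)
  have "e 0 + e s \<in> (\<lambda>a. e 0 + e a) ` {s..<s+m}" using m2 by auto
  then have "e 0 + e s \<in> W j" using False unfolding W_def s_def[symmetric] by (simp add: span_base)
  moreover have "e 0 \<bullet> (e 0 + e s) = 1" using s1 s2 n_ge by (simp add: inner_add_right e_inner)
  ultimately show ?thesis unfolding orthogonal_def by (intro bexI[of _ "e 0 + e s"]) auto
qed

lemma indec: "\<not> (\<exists>A \<subseteq> (\<lambda>j. (W j)\<^sup>\<bottom>\<^sup>\<bottom>) ` {1..k}. A \<noteq> {} \<and> (\<lambda>j. (W j)\<^sup>\<bottom>\<^sup>\<bottom>) ` {1..k} - A \<noteq> {} \<and>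
         (\<forall>U\<in>A. \<forall>V\<in>(\<lambda>j. (W j)\<^sup>\<bottom>\<^sup>\<bottom>) ` {1..k} - A. \<forall>u\<in>U. \<forall>v\<in>V. orthogonal u v))"
proof
  assume "\<exists>A \<subseteq> (\<lambda>j. (W j)\<^sup>\<bottom>\<^sup>\<bottom>) ` {1..k}. A \<noteq> {} \<and> (\<lambda>j. (W j)\<^sup>\<bottom>\<^sup>\<bottom>) ` {1..k} - A \<noteq> {} \<and>
         (\<forall>U\<in>A. \<forall>V\<in>(\<lambda>j. (W j)\<^sup>\<bottom>\<^sup>\<bottom>) ` {1..k} - A. \<forall>u\<in>U. \<forall>v\<in>V. orthogonal u v)"
  then obtain A where A: "A \<subseteq> W ` {1..k}" "A \<noteq> {}" "W ` {1..k} - A \<noteq> {}"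
    "\<forall>U\<in>A. \<forall>V\<in>W ` {1..k} - A. \<forall>u\<in>U. \<forall>v\<in>V. orthogonal u v"
    by (auto simp: W_perp_perp)
  have e0: "e 0 \<in> W 1" using e_W1[of 0] m2 by simp
  have k1: "1 \<in> {1..k}" using k_pos by simp
  show False
  proof (cases "W 1 \<in> A")
    case True
    obtain j where j: "j \<in> {1..k}" "W j \<notin> A" using A(3) by blast
    obtain v where "v \<in> W j" "\<not> orthogonal (e 0) v" using nonorth[OF j(1)] by auto
    then show False using A(4) True j e0 by blast
  next
    case False
    obtain j where j: "j \<in> {1..k}" "W j \<in> A" using A(1,2) by blast
    obtain v where "v \<in> W j" "\<not> orthogonal (e 0) v" using nonorth[OF j(1)] by auto
    then show False using A(4) False j k1 e0 by (meson Diff_iff image_eqI orthogonal_commute)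
  qed
qed

end

theorem corollary4p2:
  fixes i :: nat
  assumes "1 \<le> i" and "i \<le> CARD('n) - 2"
  defines "k \<equiv> nat \<lceil>real CARD('n) / real (CARD('n) - i)\<rceil>"
  shows "\<exists>H :: nat \<Rightarrow> (real^'n) set.
    (\<forall>j\<in>{1..k}. subspace (H j) \<and> dim (H j) = i) \<and>
    \<comment> \<open>(i)\<close>
    span (\<Union>j\<in>{1..k}. (H j)\<^sup>\<bottom>) = UNIV \<and>
    \<not> (\<exists>A \<subseteq> (\<lambda>j. (H j)\<^sup>\<bottom>) ` {1..k}. A \<noteq> {} \<and> (\<lambda>j. (H j)\<^sup>\<bottom>) ` {1..k} - A \<noteq> {} \<and>
         (\<forall>U\<in>A. \<forall>V\<in>(\<lambda>j. (H j)\<^sup>\<bottom>) ` {1..k} - A. \<forall>u\<in>U. \<forall>v\<in>V. orthogonal u v)) \<and>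
    \<comment> \<open>(ii)\<close>
    (\<forall>E. E \<subseteq> sphere 0 1 \<and> E \<noteq> {} \<and> closed E \<and>
        (\<forall>j\<in>{1..k}. \<forall>x\<in>E. sphere 0 1 \<inter> ((\<lambda>v. v + x) ` ((H j)\<^sup>\<bottom>)) \<subseteq> E)
        \<longrightarrow> E = sphere 0 1) \<and>
    \<comment> \<open>(iii)\<close>
    (\<forall>F. closed F \<and> (\<forall>j\<in>{1..k}. \<forall>Q. rotation_fixing Q (H j) \<longrightarrow> (\<lambda>y. Q *v y) ` F \<subseteq> F)
        \<longrightarrow> (\<exists>R::real set. F = (\<Union>r\<in>R. sphere 0 r))) \<and>
    \<comment> \<open>(iv)\<close>
    (\<forall>K. convex_body K \<and> (\<forall>j\<in>{1..k}. rot_sym (H j) K)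
        \<longrightarrow> (\<exists>r>0. K = cball 0 r))"
proof -
  define m where "m = CARD('n) - i"
  have m2: "2 \<le> m" and mlt: "m < CARD('n)" using assms(1,2) by (auto simp: m_def)
  have nkm: "CARD('n) \<le> k * m"
  proof -
    have mpos: "real m > 0" using m2 by simp
    have "real CARD('n) / real m \<le> real k"
      unfolding k_def m_def[symmetric] by linarith
    then have "real CARD('n) \<le> real k * real m" using mpos by (simp add: divide_le_eq)
    then show ?thesis by (metis of_nat_le_iff of_nat_mult)
  qed
  obtain \<iota> :: "nat \<Rightarrow> 'n" where bij: "bij_betw \<iota> {0..<CARD('n)} UNIV"
    using ex_bij_betw_nat_finite[of "UNIV :: 'n set"] by auto
  interpret c: cons \<iota> m k using bij m2 mlt nkm by unfold_locales
  have im: "CARD('n) - m = i" using assms(2) by (simp add: m_def)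
  show ?thesis
  proof (intro exI[of _ "\<lambda>j. (c.W j)\<^sup>\<bottom>"] conjI allI impI ballI)
    fix j assume "j \<in> {1..k}"
    then show "subspace ((c.W j)\<^sup>\<bottom>)" "dim ((c.W j)\<^sup>\<bottom>) = i"
      using c.dim_perp[of j] im by (auto simp: subspace_orthogonal_comp)
  next
    show "span (\<Union>j\<in>{1..k}. (c.W j)\<^sup>\<bottom>\<^sup>\<bottom>) = UNIV" by (rule c.span_all)
  next
    show "\<not> (\<exists>A \<subseteq> (\<lambda>j. (c.W j)\<^sup>\<bottom>\<^sup>\<bottom>) ` {1..k}. A \<noteq> {} \<and> (\<lambda>j. (c.W j)\<^sup>\<bottom>\<^sup>\<bottom>) ` {1..k} - A \<noteq> {} \<and>
         (\<forall>U\<in>A. \<forall>V\<in>(\<lambda>j. (c.W j)\<^sup>\<bottom>\<^sup>\<bottom>) ` {1..k} - A. \<forall>u\<in>U. \<forall>v\<in>V. orthogonal u v))"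
      by (rule c.indec)
  next
    fix E :: "(real^'n) set"
    assume "E \<subseteq> sphere 0 1 \<and> E \<noteq> {} \<and> closed E \<and>
        (\<forall>j\<in>{1..k}. \<forall>x\<in>E. sphere 0 1 \<inter> ((\<lambda>v. v + x) ` ((c.W j)\<^sup>\<bottom>\<^sup>\<bottom>)) \<subseteq> E)"
    then show "E = sphere 0 1" using c.part_ii by blast
  next
    fix F :: "(real^'n) set"
    assume "closed F \<and> (\<forall>j\<in>{1..k}. \<forall>Q. rotation_fixing Q ((c.W j)\<^sup>\<bottom>) \<longrightarrow> (\<lambda>y. Q *v y) ` F \<subseteq> F)"
    then show "\<exists>R::real set. F = (\<Union>r\<in>R. sphere 0 r)" using c.part_iii by blast
  next
    fix K :: "(real^'n) set"
    assume "convex_body K \<and> (\<forall>j\<in>{1..k}. rot_sym ((c.W j)\<^sup>\<bottom>) K)"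
    then show "\<exists>r>0. K = cball 0 r" using c.part_iv by blast
  qed
qed

end
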